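(* Let $G$ be a finite abelian group, $M$ a finite category, and $V\in\mathrm{Fun}(M,\mathrm{Vect}_{\hat G})$ indecomposable. Then every endomorphism $V\to V$ (natural transformation) is either nilpotent or an isomorphism.
   Context: $\hat G=G\sqcup\{0\}$ with $0$ absorbing. $\mathrm{Vect}_{\hat G}$: objects are finite pointed sets with an action of $\hat G$ ($0v=0$, $g0=0$) such that $G$ acts freely on nonzero elements; morphisms $f$ satisfy $f(0)=0$, $f(gv)=gf(v)$, and $f(v_1)=f(v_2)\neq0\Rightarrow Gv_1=Gv_2$. Direct sum $V\oplus W$ is disjoint union with zeros identified; in $\mathrm{Fun}(M,\mathrm{Vect}_{\hat G})$ (functors and natural transformations), subobjects and direct sums are formed pointwise. A finite category has finitely many objects and morphisms. $V$ is indecomposable if $V\neq0$ and $V=V_1\oplus V_2$ (for subfunctors $V_1,V_2$) implies $V_1=0$ or $V_2=0$. A natural transformation $N:V\to V$ is nilpotent if $N^m$ is the zero transformation for some $m\in\mathbb N$. *)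

theory Defs
  imports "HOL-Algebra.Group"
begin

record ('o,'m) category =
  cat_ob   :: "'o set"
  cat_mor  :: "'m set"
  cat_dom  :: "'m \<Rightarrow> 'o"
  cat_cod  :: "'m \<Rightarrow> 'o"
  cat_id   :: "'o \<Rightarrow> 'm"
  cat_comp :: "'m \<Rightarrow> 'm \<Rightarrow> 'm"   (* cat_comp g f = g \<circ> f *)

definition is_category :: "('o,'m) category \<Rightarrow> bool" where
  "is_category M \<longleftrightarrow>
     (\<forall>f\<in>cat_mor M. cat_dom M f \<in> cat_ob M \<and> cat_cod M f \<in> cat_ob M) \<and>
     (\<forall>a\<in>cat_ob M. cat_id M a \<in> cat_mor M \<and> cat_dom M (cat_id M a) = a \<and> cat_cod M (cat_id M a) = a) \<and>
     (\<forall>f\<in>cat_mor M. \<forall>g\<in>cat_mor M. cat_cod M f = cat_dom M g \<longrightarrow>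
        cat_comp M g f \<in> cat_mor M \<and> cat_dom M (cat_comp M g f) = cat_dom M f \<and>
        cat_cod M (cat_comp M g f) = cat_cod M g) \<and>
     (\<forall>f\<in>cat_mor M. cat_comp M (cat_id M (cat_cod M f)) f = f \<and> cat_comp M f (cat_id M (cat_dom M f)) = f) \<and>
     (\<forall>f\<in>cat_mor M. \<forall>g\<in>cat_mor M. \<forall>h\<in>cat_mor M.
        cat_cod M f = cat_dom M g \<longrightarrow> cat_cod M g = cat_dom M h \<longrightarrow>
        cat_comp M h (cat_comp M g f) = cat_comp M (cat_comp M h g) f)"

definition finite_category :: "('o,'m) category \<Rightarrow> bool" where
  "finite_category M \<longleftrightarrow> is_category M \<and> finite (cat_ob M) \<and> finite (cat_mor M)"

text \<open>An object of Vect over G-hat: a finite set X with base point z (the element 0)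
  and an action of G; the absorbing element 0 of G-hat acts as the constant map to z.\<close>

definition vect_obj :: "('g,'b) monoid_scheme \<Rightarrow> 'x set \<Rightarrow> 'x \<Rightarrow> ('g \<Rightarrow> 'x \<Rightarrow> 'x) \<Rightarrow> bool" where
  "vect_obj G X z act \<longleftrightarrow>
     finite X \<and> z \<in> X \<and>
     (\<forall>g\<in>carrier G. \<forall>v\<in>X. act g v \<in> X) \<and>
     (\<forall>v\<in>X. act \<one>\<^bsub>G\<^esub> v = v) \<and>
     (\<forall>g\<in>carrier G. \<forall>h\<in>carrier G. \<forall>v\<in>X. act (g \<otimes>\<^bsub>G\<^esub> h) v = act g (act h v)) \<and>
     (\<forall>g\<in>carrier G. act g z = z) \<and>
     (\<forall>g\<in>carrier G. \<forall>v\<in>X. v \<noteq> z \<longrightarrow> act g v = v \<longrightarrow> g = \<one>\<^bsub>G\<^esub>)"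

definition vect_mor :: "('g,'b) monoid_scheme \<Rightarrow> 'x set \<Rightarrow> 'x \<Rightarrow> ('g \<Rightarrow> 'x \<Rightarrow> 'x)
    \<Rightarrow> 'x set \<Rightarrow> 'x \<Rightarrow> ('g \<Rightarrow> 'x \<Rightarrow> 'x) \<Rightarrow> ('x \<Rightarrow> 'x) \<Rightarrow> bool" where
  "vect_mor G X z act Y w act' f \<longleftrightarrow>
     (\<forall>v\<in>X. f v \<in> Y) \<and> f z = w \<and>
     (\<forall>g\<in>carrier G. \<forall>v\<in>X. f (act g v) = act' g (f v)) \<and>
     (\<forall>v1\<in>X. \<forall>v2\<in>X. f v1 = f v2 \<longrightarrow> f v1 \<noteq> w \<longrightarrow> (\<exists>g\<in>carrier G. v1 = act g v2))"

record ('o,'m,'g,'x) vfunctor =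
  vset  :: "'o \<Rightarrow> 'x set"
  vzero :: "'o \<Rightarrow> 'x"
  vact  :: "'o \<Rightarrow> 'g \<Rightarrow> 'x \<Rightarrow> 'x"
  vmap  :: "'m \<Rightarrow> 'x \<Rightarrow> 'x"

definition is_vfunctor :: "('g,'b) monoid_scheme \<Rightarrow> ('o,'m) category \<Rightarrow> ('o,'m,'g,'x) vfunctor \<Rightarrow> bool" where
  "is_vfunctor G M V \<longleftrightarrow>
     (\<forall>a\<in>cat_ob M. vect_obj G (vset V a) (vzero V a) (vact V a)) \<and>
     (\<forall>f\<in>cat_mor M. vect_mor G (vset V (cat_dom M f)) (vzero V (cat_dom M f)) (vact V (cat_dom M f))
                                  (vset V (cat_cod M f)) (vzero V (cat_cod M f)) (vact V (cat_cod M f))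
                                  (vmap V f)) \<and>
     (\<forall>a\<in>cat_ob M. \<forall>v\<in>vset V a. vmap V (cat_id M a) v = v) \<and>
     (\<forall>f\<in>cat_mor M. \<forall>g\<in>cat_mor M. cat_cod M f = cat_dom M g \<longrightarrow>
        (\<forall>v\<in>vset V (cat_dom M f). vmap V (cat_comp M g f) v = vmap V g (vmap V f v)))"

definition nat_endo :: "('g,'b) monoid_scheme \<Rightarrow> ('o,'m) category \<Rightarrow> ('o,'m,'g,'x) vfunctor
    \<Rightarrow> ('o \<Rightarrow> 'x \<Rightarrow> 'x) \<Rightarrow> bool" where
  "nat_endo G M V N \<longleftrightarrow>
     (\<forall>a\<in>cat_ob M. vect_mor G (vset V a) (vzero V a) (vact V a) (vset V a) (vzero V a) (vact V a) (N a)) \<and>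
     (\<forall>f\<in>cat_mor M. \<forall>v\<in>vset V (cat_dom M f).
        N (cat_cod M f) (vmap V f v) = vmap V f (N (cat_dom M f) v))"

definition nilpotent_endo :: "('o,'m) category \<Rightarrow> ('o,'m,'g,'x) vfunctor \<Rightarrow> ('o \<Rightarrow> 'x \<Rightarrow> 'x) \<Rightarrow> bool" where
  "nilpotent_endo M V N \<longleftrightarrow>
     (\<exists>m::nat. \<forall>a\<in>cat_ob M. \<forall>v\<in>vset V a. (N a ^^ m) v = vzero V a)"

definition iso_endo :: "('g,'b) monoid_scheme \<Rightarrow> ('o,'m) category \<Rightarrow> ('o,'m,'g,'x) vfunctor
    \<Rightarrow> ('o \<Rightarrow> 'x \<Rightarrow> 'x) \<Rightarrow> bool" where
  "iso_endo G M V N \<longleftrightarrow>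
     (\<exists>N'. nat_endo G M V N' \<and>
        (\<forall>a\<in>cat_ob M. \<forall>v\<in>vset V a. N' a (N a v) = v \<and> N a (N' a v) = v))"

definition subfunctor :: "('g,'b) monoid_scheme \<Rightarrow> ('o,'m) category \<Rightarrow> ('o,'m,'g,'x) vfunctor
    \<Rightarrow> ('o \<Rightarrow> 'x set) \<Rightarrow> bool" where
  "subfunctor G M V S \<longleftrightarrow>
     (\<forall>a\<in>cat_ob M. S a \<subseteq> vset V a \<and> vzero V a \<in> S a \<and>
        (\<forall>g\<in>carrier G. \<forall>v\<in>S a. vact V a g v \<in> S a)) \<and>
     (\<forall>f\<in>cat_mor M. \<forall>v\<in>S (cat_dom M f). vmap V f v \<in> S (cat_cod M f))"

definition zero_subfunctor :: "('o,'m) category \<Rightarrow> ('o,'m,'g,'x) vfunctor \<Rightarrow> ('o \<Rightarrow> 'x set) \<Rightarrow> bool" where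
  "zero_subfunctor M V S \<longleftrightarrow> (\<forall>a\<in>cat_ob M. S a = {vzero V a})"

definition is_direct_sum :: "('o,'m) category \<Rightarrow> ('o,'m,'g,'x) vfunctor
    \<Rightarrow> ('o \<Rightarrow> 'x set) \<Rightarrow> ('o \<Rightarrow> 'x set) \<Rightarrow> bool" where
  "is_direct_sum M V S1 S2 \<longleftrightarrow>
     (\<forall>a\<in>cat_ob M. vset V a = S1 a \<union> S2 a \<and> S1 a \<inter> S2 a = {vzero V a})"

definition indecomposable :: "('g,'b) monoid_scheme \<Rightarrow> ('o,'m) category \<Rightarrow> ('o,'m,'g,'x) vfunctor \<Rightarrow> bool" where
  "indecomposable G M V \<longleftrightarrow>
     \<not> zero_subfunctor M V (vset V) \<and>
     (\<forall>S1 S2. subfunctor G M V S1 \<longrightarrow> subfunctor G M V S2 \<longrightarrow> is_direct_sum M V S1 S2 \<longrightarrow>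
        zero_subfunctor M V S1 \<or> zero_subfunctor M V S2)"

end

theory Submission
  imports Defs
begin

lemma pinj:
  assumes "vect_obj G X z act" "vect_mor G X z act X z act N"
    "v1 \<in> X" "v2 \<in> X" "N v1 = N v2" "N v1 \<noteq> z"
  shows "v1 = v2"
proof -
  from assms obtain g where g: "g \<in> carrier G" "v1 = act g v2"
    unfolding vect_mor_def by blast
  have "N v1 = act g (N v2)" using assms g unfolding vect_mor_def by auto
  hence "act g (N v1) = N v1" using assms by simp
  moreover have "N v1 \<in> X" using assms unfolding vect_mor_def by auto
  ultimately have "g = \<one>\<^bsub>G\<^esub>" using assms g unfolding vect_obj_def by blast
  thus ?thesis using g assms unfolding vect_obj_def by auto
qed

lemma funpow_in:
  assumes "\<forall>v\<in>X. N v \<in> X" "v \<in> X"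
  shows "(N ^^ k) v \<in> X"
  using assms by (induction k) auto

lemma funpow_comm:
  assumes "\<forall>v\<in>A. h1 (F v) = F (h2 v)" "\<forall>v\<in>A. h2 v \<in> A" "v \<in> A"
  shows "(h1 ^^ k) (F v) = F ((h2 ^^ k) v)"
  using assms(3)
proof (induction k)
  case 0 then show ?case by simp
next
  case (Suc k)
  have "(h1 ^^ Suc k) (F v) = h1 (F ((h2 ^^ k) v))" using Suc by simp
  also have "\<dots> = F (h2 ((h2 ^^ k) v))"
    using assms funpow_in[OF assms(2) Suc.prems] by blast
  finally show ?case by simp
qed

lemma funpow_zero:
  assumes "N z = z"
  shows "(N ^^ k) z = z"
  using assms by (induction k) auto

lemma funpow_zero_mono:
  assumes "N z = z" "(N ^^ m) v = z" "m \<le> k"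
  shows "(N ^^ k) v = z"
proof -
  have "(N ^^ k) v = (N ^^ (k - m)) ((N ^^ m) v)"
    using assms(3) by (metis funpow_add le_add_diff_inverse2 o_apply)
  thus ?thesis using assms funpow_zero by metis
qed

lemma periodic_back:
  assumes "\<forall>v\<in>X. N v \<in> X" "N z = z"
    "\<And>v1 v2. v1 \<in> X \<Longrightarrow> v2 \<in> X \<Longrightarrow> N v1 = N v2 \<Longrightarrow> N v1 \<noteq> z \<Longrightarrow> v1 = v2"
    "v \<in> X"
  shows "(N ^^ i) v = (N ^^ (i + d)) v \<Longrightarrow> (N ^^ i) v \<noteq> z \<Longrightarrow> v = (N ^^ d) v"
proof (induction i)
  case 0 then show ?case by simp
next
  case (Suc i)
  have a: "N ((N ^^ i) v) = N ((N ^^ (i + d)) v)" using Suc.prems by simp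
  have b: "N ((N ^^ i) v) \<noteq> z" using Suc.prems by simp
  have "(N ^^ i) v = (N ^^ (i + d)) v"
    using assms(3)[OF funpow_in[OF assms(1,4)] funpow_in[OF assms(1,4)] a b] .
  moreover have "(N ^^ i) v \<noteq> z" using b assms(2) by auto
  ultimately show ?case using Suc.IH by blast
qed

lemma dichotomy:
  assumes "finite X" "\<forall>v\<in>X. N v \<in> X" "N z = z"
    "\<And>v1 v2. v1 \<in> X \<Longrightarrow> v2 \<in> X \<Longrightarrow> N v1 = N v2 \<Longrightarrow> N v1 \<noteq> z \<Longrightarrow> v1 = v2"
    "v \<in> X"
  shows "(\<exists>p>0. (N ^^ p) v = v) \<or> (\<exists>m. (N ^^ m) v = z)"
proof -
  let ?f = "\<lambda>i. (N ^^ i) v"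
  have "?f ` {0..card X} \<subseteq> X" using funpow_in[OF assms(2,5)] by auto
  moreover have "card X < card {0..card X}" by simp
  ultimately have "\<not> inj_on ?f {0..card X}"
    using assms(1) by (meson card_inj_on_le not_le)
  then obtain i j where ij: "i < j" "?f i = ?f j"
    unfolding inj_on_def by (metis linorder_neqE_nat)
  show ?thesis
  proof (cases "?f i = z")
    case True then show ?thesis by blast
  next
    case False
    have "(N ^^ i) v = (N ^^ (i + (j - i))) v" using ij by simp
    hence "v = (N ^^ (j - i)) v"
      using periodic_back[OF assms(2,3) assms(4) assms(5)] False by blast
    thus ?thesis using ij by (metis zero_less_diff)
  qed
qed

theorem mainTheorem5:
  fixes G :: "('g,'b) monoid_scheme" and M :: "('o,'m) category"
    and V :: "('o,'m,'g,'x) vfunctor" and N :: "'o \<Rightarrow> 'x \<Rightarrow> 'x"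
  assumes "comm_group G" and "finite (carrier G)"
    and "finite_category M"
    and "is_vfunctor G M V"
    and "indecomposable G M V"
    and "nat_endo G M V N"
  shows "nilpotent_endo M V N \<or> iso_endo G M V N"
proof -
  have obj: "\<And>a. a \<in> cat_ob M \<Longrightarrow> vect_obj G (vset V a) (vzero V a) (vact V a)"
    using assms(4) unfolding is_vfunctor_def by blast
  have mor: "\<And>a. a \<in> cat_ob M \<Longrightarrow>
      vect_mor G (vset V a) (vzero V a) (vact V a) (vset V a) (vzero V a) (vact V a) (N a)"
    using assms(6) unfolding nat_endo_def by blast
  have maps: "\<And>a. a \<in> cat_ob M \<Longrightarrow> \<forall>v\<in>vset V a. N a v \<in> vset V a"
    using mor unfolding vect_mor_def by blast
  have nz: "\<And>a. a \<in> cat_ob M \<Longrightarrow> N a (vzero V a) = vzero V a"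
    using mor unfolding vect_mor_def by blast
  have fin: "\<And>a. a \<in> cat_ob M \<Longrightarrow> finite (vset V a)"
    using obj unfolding vect_obj_def by blast
  have zin: "\<And>a. a \<in> cat_ob M \<Longrightarrow> vzero V a \<in> vset V a"
    using obj unfolding vect_obj_def by blast
  have actin: "\<And>a g v. a \<in> cat_ob M \<Longrightarrow> g \<in> carrier G \<Longrightarrow> v \<in> vset V a \<Longrightarrow> vact V a g v \<in> vset V a"
    using obj unfolding vect_obj_def by blast
  have actz: "\<And>a g. a \<in> cat_ob M \<Longrightarrow> g \<in> carrier G \<Longrightarrow> vact V a g (vzero V a) = vzero V a"
    using obj unfolding vect_obj_def by blast
  have equi: "\<And>a g. a \<in> cat_ob M \<Longrightarrow> g \<in> carrier G \<Longrightarrow>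
      \<forall>v\<in>vset V a. N a (vact V a g v) = vact V a g (N a v)"
    using mor unfolding vect_mor_def by blast
  have pi: "\<And>a v1 v2. a \<in> cat_ob M \<Longrightarrow> v1 \<in> vset V a \<Longrightarrow> v2 \<in> vset V a \<Longrightarrow>
      N a v1 = N a v2 \<Longrightarrow> N a v1 \<noteq> vzero V a \<Longrightarrow> v1 = v2"
    using pinj[OF obj mor] by blast
  have cat: "is_category M" using assms(3) unfolding finite_category_def by blast
  have domob: "\<And>f. f \<in> cat_mor M \<Longrightarrow> cat_dom M f \<in> cat_ob M"
    and codob: "\<And>f. f \<in> cat_mor M \<Longrightarrow> cat_cod M f \<in> cat_ob M"
    using cat unfolding is_category_def by blast+
  have fmor: "\<And>f. f \<in> cat_mor M \<Longrightarrow> vect_mor G (vset V (cat_dom M f)) (vzero V (cat_dom M f)) (vact V (cat_dom M f))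
                                  (vset V (cat_cod M f)) (vzero V (cat_cod M f)) (vact V (cat_cod M f))
                                  (vmap V f)"
    using assms(4) unfolding is_vfunctor_def by blast
  have fin_: "\<And>f v. f \<in> cat_mor M \<Longrightarrow> v \<in> vset V (cat_dom M f) \<Longrightarrow> vmap V f v \<in> vset V (cat_cod M f)"
    and fz: "\<And>f. f \<in> cat_mor M \<Longrightarrow> vmap V f (vzero V (cat_dom M f)) = vzero V (cat_cod M f)"
    using fmor unfolding vect_mor_def by blast+
  have nat: "\<And>f. f \<in> cat_mor M \<Longrightarrow> \<forall>v\<in>vset V (cat_dom M f).
        N (cat_cod M f) (vmap V f v) = vmap V f (N (cat_dom M f) v)"
    using assms(6) unfolding nat_endo_def by blast
  define S1 where "S1 a = {v \<in> vset V a. \<exists>p>0. (N a ^^ p) v = v}" for a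
  define S2 where "S2 a = {v \<in> vset V a. \<exists>m. (N a ^^ m) v = vzero V a}" for a
  have sub1: "subfunctor G M V S1"
    unfolding subfunctor_def
  proof (intro conjI ballI)
    fix a assume a: "a \<in> cat_ob M"
    show "S1 a \<subseteq> vset V a" unfolding S1_def by auto
    show "vzero V a \<in> S1 a" unfolding S1_def using a zin nz
      by (auto intro!: exI[of _ 1])
    fix g v assume g: "g \<in> carrier G" and v: "v \<in> S1 a"
    then obtain p where p: "p > 0" "(N a ^^ p) v = v" "v \<in> vset V a" unfolding S1_def by auto
    have "(N a ^^ p) (vact V a g v) = vact V a g ((N a ^^ p) v)"
      using funpow_comm[OF equi[OF a g] maps[OF a] p(3)] .
    thus "vact V a g v \<in> S1 a" unfolding S1_def using p actin a g by auto
  next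
    fix f v assume f: "f \<in> cat_mor M" and v: "v \<in> S1 (cat_dom M f)"
    then obtain p where p: "p > 0" "(N (cat_dom M f) ^^ p) v = v" "v \<in> vset V (cat_dom M f)"
      unfolding S1_def by auto
    have "(N (cat_cod M f) ^^ p) (vmap V f v) = vmap V f ((N (cat_dom M f) ^^ p) v)"
      using funpow_comm[OF nat[OF f] maps[OF domob[OF f]] p(3)] .
    thus "vmap V f v \<in> S1 (cat_cod M f)" unfolding S1_def using p fin_ f by auto
  qed
  have sub2: "subfunctor G M V S2"
    unfolding subfunctor_def
  proof (intro conjI ballI)
    fix a assume a: "a \<in> cat_ob M"
    show "S2 a \<subseteq> vset V a" unfolding S2_def by auto
    show "vzero V a \<in> S2 a" unfolding S2_def using a zin
      by (auto intro!: exI[of _ 0])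
    fix g v assume g: "g \<in> carrier G" and v: "v \<in> S2 a"
    then obtain p where p: "(N a ^^ p) v = vzero V a" "v \<in> vset V a" unfolding S2_def by auto
    have "(N a ^^ p) (vact V a g v) = vact V a g ((N a ^^ p) v)"
      using funpow_comm[OF equi[OF a g] maps[OF a] p(2)] .
    thus "vact V a g v \<in> S2 a" unfolding S2_def using p actin actz a g by auto
  next
    fix f v assume f: "f \<in> cat_mor M" and v: "v \<in> S2 (cat_dom M f)"
    then obtain p where p: "(N (cat_dom M f) ^^ p) v = vzero V (cat_dom M f)" "v \<in> vset V (cat_dom M f)"
      unfolding S2_def by auto
    have "(N (cat_cod M f) ^^ p) (vmap V f v) = vmap V f ((N (cat_dom M f) ^^ p) v)"
      using funpow_comm[OF nat[OF f] maps[OF domob[OF f]] p(2)] .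
    thus "vmap V f v \<in> S2 (cat_cod M f)" unfolding S2_def using p fin_ fz f by auto
  qed
  have ds: "is_direct_sum M V S1 S2"
    unfolding is_direct_sum_def
  proof (intro ballI conjI)
    fix a assume a: "a \<in> cat_ob M"
    show "vset V a = S1 a \<union> S2 a"
    proof
      show "vset V a \<subseteq> S1 a \<union> S2 a"
      proof
        fix v assume v: "v \<in> vset V a"
        have "(\<exists>p>0. (N a ^^ p) v = v) \<or> (\<exists>m. (N a ^^ m) v = vzero V a)"
          by (rule dichotomy[OF fin[OF a] maps[OF a] nz[OF a] pi[OF a] v])
        thus "v \<in> S1 a \<union> S2 a" unfolding S1_def S2_def using v by blast
      qed
      show "S1 a \<union> S2 a \<subseteq> vset V a" unfolding S1_def S2_def by blast
    qed
    show "S1 a \<inter> S2 a = {vzero V a}"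
    proof
      show "{vzero V a} \<subseteq> S1 a \<inter> S2 a"
      proof -
        have "(N a ^^ 1) (vzero V a) = vzero V a" using nz[OF a] by simp
        moreover have "(N a ^^ 0) (vzero V a) = vzero V a" by simp
        ultimately show ?thesis using zin[OF a] unfolding S1_def S2_def
          by (metis (mono_tags, lifting) IntI empty_subsetI insert_subset mem_Collect_eq zero_less_one)
      qed
      show "S1 a \<inter> S2 a \<subseteq> {vzero V a}"
      proof
        fix v assume "v \<in> S1 a \<inter> S2 a"
        then obtain p m where p: "p > 0" "(N a ^^ p) v = v" and m: "(N a ^^ m) v = vzero V a"
          unfolding S1_def S2_def by auto
        have "(N a ^^ (p * m)) v = v"
          using funpow_zero[of "N a ^^ p" v m] p(2) by (simp add: funpow_mult)
        moreover have "(N a ^^ (p * m)) v = vzero V a"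
          using funpow_zero_mono[of "N a", OF nz[OF a] m] p(1) by simp
        ultimately show "v \<in> {vzero V a}" by simp
      qed
    qed
  qed
  have "zero_subfunctor M V S1 \<or> zero_subfunctor M V S2"
    using assms(5) sub1 sub2 ds unfolding indecomposable_def by blast
  then show ?thesis
  proof
    assume z1: "zero_subfunctor M V S1"
    have ev: "\<forall>x\<in>(SIGMA a:cat_ob M. vset V a). \<exists>m. (N (fst x) ^^ m) (snd x) = vzero V (fst x)"
    proof
      fix x assume "x \<in> (SIGMA a:cat_ob M. vset V a)"
      then obtain a v where x: "x = (a, v)" "a \<in> cat_ob M" "v \<in> vset V a" by auto
      show "\<exists>m. (N (fst x) ^^ m) (snd x) = vzero V (fst x)"
      proof (cases "v = vzero V a")
        case True then show ?thesis using x by (auto intro!: exI[of _ 0])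
      next
        case False
        hence "v \<notin> S1 a" using z1 x unfolding zero_subfunctor_def by auto
        hence "v \<in> S2 a" using ds x unfolding is_direct_sum_def by auto
        then show ?thesis using x unfolding S2_def by auto
      qed
    qed
    then obtain mm where mm: "\<forall>x\<in>(SIGMA a:cat_ob M. vset V a). (N (fst x) ^^ mm x) (snd x) = vzero V (fst x)"
      by metis
    have finS: "finite (SIGMA a:cat_ob M. vset V a)"
      using assms(3) fin unfolding finite_category_def by auto
    define K where "K = Max (mm ` (SIGMA a:cat_ob M. vset V a))"
    have "\<forall>a\<in>cat_ob M. \<forall>v\<in>vset V a. (N a ^^ K) v = vzero V a"
    proof (intro ballI)
      fix a v assume a: "a \<in> cat_ob M" and v: "v \<in> vset V a"
      have "mm (a, v) \<le> K" unfolding K_def using finS a v by (auto intro!: Max_ge)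
      moreover have "(N a ^^ mm (a, v)) v = vzero V a" using mm a v by force
      ultimately show "(N a ^^ K) v = vzero V a" using funpow_zero_mono[of "N a", OF nz[OF a]] by blast
    qed
    thus ?thesis unfolding nilpotent_endo_def by blast
  next
    assume z2: "zero_subfunctor M V S2"
    have per: "\<And>a v. a \<in> cat_ob M \<Longrightarrow> v \<in> vset V a \<Longrightarrow> \<exists>p>0. (N a ^^ p) v = v"
    proof -
      fix a v assume a: "a \<in> cat_ob M" and v: "v \<in> vset V a"
      show "\<exists>p>0. (N a ^^ p) v = v"
      proof (cases "v = vzero V a")
        case True then show ?thesis using nz[OF a] by (auto intro!: exI[of _ 1])
      next
        case False
        hence "v \<notin> S2 a" using z2 a unfolding zero_subfunctor_def by auto
        hence "v \<in> S1 a" using ds a v unfolding is_direct_sum_def by auto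
        then show ?thesis unfolding S1_def by auto
      qed
    qed
    have surj: "\<And>a. a \<in> cat_ob M \<Longrightarrow> N a ` vset V a = vset V a"
    proof
      fix a assume a: "a \<in> cat_ob M"
      show "N a ` vset V a \<subseteq> vset V a" using maps[OF a] by auto
      show "vset V a \<subseteq> N a ` vset V a"
      proof
        fix v assume v: "v \<in> vset V a"
        obtain p where p: "p > 0" "(N a ^^ p) v = v" using per[OF a v] by blast
        have "v = N a ((N a ^^ (p - 1)) v)"
          using p funpow.simps(2)[of "p - 1" "N a"] by simp
        thus "v \<in> N a ` vset V a" using funpow_in[OF maps[OF a] v] by blast
      qed
    qed
    have injN: "\<And>a. a \<in> cat_ob M \<Longrightarrow> inj_on (N a) (vset V a)"
    proof -
      fix a assume a: "a \<in> cat_ob M"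
      show "inj_on (N a) (vset V a)"
        by (rule eq_card_imp_inj_on[OF fin[OF a]]) (simp add: surj[OF a])
    qed
    define N' where "N' a = inv_into (vset V a) (N a)" for a
    have N'in: "\<And>a v. a \<in> cat_ob M \<Longrightarrow> v \<in> vset V a \<Longrightarrow> N' a v \<in> vset V a"
      unfolding N'_def using surj by (metis inv_into_into)
    have NN': "\<And>a v. a \<in> cat_ob M \<Longrightarrow> v \<in> vset V a \<Longrightarrow> N a (N' a v) = v"
      unfolding N'_def using surj by (metis f_inv_into_f)
    have N'N: "\<And>a v. a \<in> cat_ob M \<Longrightarrow> v \<in> vset V a \<Longrightarrow> N' a (N a v) = v"
      unfolding N'_def using injN by (metis inv_into_f_f)
    have "nat_endo G M V N'"
      unfolding nat_endo_def
    proof (intro conjI ballI)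
      fix a assume a: "a \<in> cat_ob M"
      have one: "\<one>\<^bsub>G\<^esub> \<in> carrier G"
        using assms(1) by (simp add: comm_group_def group.is_monoid monoid.one_closed)
      have "vect_obj G (vset V a) (vzero V a) (vact V a)" using obj[OF a] .
      show "vect_mor G (vset V a) (vzero V a) (vact V a) (vset V a) (vzero V a) (vact V a) (N' a)"
        unfolding vect_mor_def
      proof (intro conjI ballI impI)
        fix v assume "v \<in> vset V a" thus "N' a v \<in> vset V a" using N'in a by blast
      next
        show "N' a (vzero V a) = vzero V a" using N'N[OF a zin[OF a]] nz[OF a] by simp
      next
        fix g v assume g: "g \<in> carrier G" and v: "v \<in> vset V a"
        have "N a (vact V a g (N' a v)) = vact V a g v"
          using equi[OF a g] N'in[OF a v] NN'[OF a v] by simp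
        hence "N' a (N a (vact V a g (N' a v))) = N' a (vact V a g v)" by simp
        thus "N' a (vact V a g v) = vact V a g (N' a v)"
          using N'N[OF a actin[OF a g N'in[OF a v]]] by simp
      next
        fix v1 v2 assume v: "v1 \<in> vset V a" "v2 \<in> vset V a" "N' a v1 = N' a v2"
        hence "v1 = v2" using NN'[OF a] by metis
        moreover have "v2 = vact V a \<one>\<^bsub>G\<^esub> v2" using obj[OF a] v unfolding vect_obj_def by auto
        ultimately show "\<exists>g\<in>carrier G. v1 = vact V a g v2" using one by blast
      qed
    next
      fix f v assume f: "f \<in> cat_mor M" and v: "v \<in> vset V (cat_dom M f)"
      let ?d = "cat_dom M f" and ?c = "cat_cod M f"
      have w: "N' ?d v \<in> vset V ?d" using N'in[OF domob[OF f] v] .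
      have "N ?c (vmap V f (N' ?d v)) = vmap V f v"
        using nat[OF f] w NN'[OF domob[OF f] v] by simp
      hence "N' ?c (N ?c (vmap V f (N' ?d v))) = N' ?c (vmap V f v)" by simp
      thus "N' ?c (vmap V f v) = vmap V f (N' ?d v)"
        using N'N[OF codob[OF f] fin_[OF f w]] by simp
    qed
    then show ?thesis unfolding iso_endo_def using NN' N'N by blast
  qed
qed

end
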